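(* Let $v$ be a typical weight, let $T:\mathcal{H}(\mathbb{D})\to\mathcal{H}(\mathbb{D})$ be a linear transformation, and let $X\subset\mathcal{H}(\mathbb{D})$ be a Banach space. For $z\in\mathbb{D}$ define the linear maps $(K_z^H)_T(f)=Tf(z)$, $(K_{z,1}^{\mathcal{B}})_T(f)=(Tf)'(z)$ on $X$, and $(K_0^{\mathcal{B}})_T(f)=Tf(0)$. Then: (i) $T:X\to H_{v,0}$ is bounded if and only if $(K_z^H)_T\in X^*$ for all $z\in\mathbb{D}$ and $v(z)(K_z^H)_T\to 0$ weak$^*$ in $X^*$ as $|z|\to1$. (ii) $T:X\to\mathcal{B}_{v,0}$ is bounded if and only if $(K_0^{\mathcal{B}})_T\in X^*$, $(K_{z,1}^{\mathcal{B}})_T\in X^*$ for all $z\in\mathbb{D}$, and $v(z)(K_{z,1}^{\mathcal{B}})_T\to 0$ weak$^*$ in $X^*$ as $|z|\to1$.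
   Context: $\mathbb{D}$ is the open unit disk, $\mathcal{H}(\mathbb{D})$ the holomorphic functions on $\mathbb{D}$. A weight is a continuous $v:\mathbb{D}\to(0,1]$; it is typical if it is radial ($v(z)=v(|z|)$), non-increasing in $|z|$, and $\lim_{|z|\to1}v(z)=0$. $H_v=\{f:\sup_z v(z)|f(z)|<\infty\}$ with norm $\sup_z v(z)|f(z)|$; $\mathcal{B}_v=\{f:\sup_z v(z)|f'(z)|<\infty\}$ with norm $|f(0)|+\sup_z v(z)|f'(z)|$. The little growth spaces are $H_{v,0}=\{f\in\mathcal{H}(\mathbb{D}):\lim_{|z|\to1}v(z)|f(z)|=0\}$ and $\mathcal{B}_{v,0}=\{f\in\mathcal{H}(\mathbb{D}):\lim_{|z|\to1}v(z)|f'(z)|=0\}$, closed subspaces of $H_v$, $\mathcal{B}_v$. $X^*$ is the dual of $X$. *)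

theory Defs
  imports "HOL-Complex_Analysis.Complex_Analysis"
begin

abbreviation disk :: "complex set" where "disk \<equiv> ball 0 1"

text \<open>H(D): holomorphic functions on the disk, represented canonically
  (value 0 outside the disk), so that function equality is equality on D.\<close>
definition HD :: "(complex \<Rightarrow> complex) set" where
  "HD = {f. f holomorphic_on disk \<and> (\<forall>z. 1 \<le> norm z \<longrightarrow> f z = 0)}"

definition typical_weight :: "(complex \<Rightarrow> real) \<Rightarrow> bool" where
  "typical_weight v \<longleftrightarrow>
     continuous_on disk v \<and>
     (\<forall>z\<in>disk. 0 < v z \<and> v z \<le> 1) \<and>
     (\<forall>z\<in>disk. \<forall>w\<in>disk. norm z = norm w \<longrightarrow> v z = v w) \<and>
     (\<forall>z\<in>disk. \<forall>w\<in>disk. norm z \<le> norm w \<longrightarrow> v w \<le> v z) \<and>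
     (\<forall>e>0. \<exists>r<1. \<forall>z. r < norm z \<longrightarrow> norm z < 1 \<longrightarrow> \<bar>v z\<bar> < e)"

definition vanishes_at_boundary :: "(complex \<Rightarrow> real) \<Rightarrow> bool" where
  "vanishes_at_boundary g \<longleftrightarrow>
     (\<forall>e>0. \<exists>r<1. \<forall>z. r < norm z \<longrightarrow> norm z < 1 \<longrightarrow> \<bar>g z\<bar> < e)"

definition Hv0 :: "(complex \<Rightarrow> real) \<Rightarrow> (complex \<Rightarrow> complex) set" where
  "Hv0 v = {f \<in> HD. vanishes_at_boundary (\<lambda>z. v z * norm (f z))}"

definition Bv0 :: "(complex \<Rightarrow> real) \<Rightarrow> (complex \<Rightarrow> complex) set" where
  "Bv0 v = {f \<in> HD. vanishes_at_boundary (\<lambda>z. v z * norm (deriv f z))}"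

definition linear_on_HD :: "((complex \<Rightarrow> complex) \<Rightarrow> (complex \<Rightarrow> complex)) \<Rightarrow> bool" where
  "linear_on_HD T \<longleftrightarrow> (\<forall>f\<in>HD. T f \<in> HD) \<and>
     (\<forall>f\<in>HD. \<forall>g\<in>HD. \<forall>a b::complex.
        T (\<lambda>z. a * f z + b * g z) = (\<lambda>z. a * T f z + b * T g z))"

definition banach_subspace :: "(complex \<Rightarrow> complex) set \<Rightarrow> ((complex \<Rightarrow> complex) \<Rightarrow> real) \<Rightarrow> bool" where
  "banach_subspace X N \<longleftrightarrow>
     X \<subseteq> HD \<and> (\<lambda>z. 0) \<in> X \<and>
     (\<forall>f\<in>X. \<forall>g\<in>X. \<forall>a b::complex. (\<lambda>z. a * f z + b * g z) \<in> X) \<and>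
     (\<forall>f\<in>X. 0 \<le> N f \<and> (N f = 0 \<longleftrightarrow> f = (\<lambda>z. 0))) \<and>
     (\<forall>f\<in>X. \<forall>a::complex. N (\<lambda>z. a * f z) = norm a * N f) \<and>
     (\<forall>f\<in>X. \<forall>g\<in>X. N (\<lambda>z. f z + g z) \<le> N f + N g) \<and>
     (\<forall>s. (\<forall>n. s n \<in> X) \<longrightarrow>
          (\<forall>e>0. \<exists>M. \<forall>m\<ge>M. \<forall>n\<ge>M. N (\<lambda>z. s m z - s n z) < e) \<longrightarrow>
          (\<exists>l\<in>X. (\<lambda>n. N (\<lambda>z. s n z - l z)) \<longlonglongrightarrow> 0))"

definition in_dual :: "(complex \<Rightarrow> complex) set \<Rightarrow> ((complex \<Rightarrow> complex) \<Rightarrow> real)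
    \<Rightarrow> ((complex \<Rightarrow> complex) \<Rightarrow> complex) \<Rightarrow> bool" where
  "in_dual X N L \<longleftrightarrow>
     (\<forall>f\<in>X. \<forall>g\<in>X. \<forall>a b::complex. L (\<lambda>z. a * f z + b * g z) = a * L f + b * L g) \<and>
     (\<exists>C. \<forall>f\<in>X. norm (L f) \<le> C * N f)"

text \<open>T : X \<rightarrow> H_{v,0} bounded (norm of H_v is sup_z v(z)|f(z)|).\<close>
definition bounded_into_Hv0 where
  "bounded_into_Hv0 v X N T \<longleftrightarrow> (\<forall>f\<in>X. T f \<in> Hv0 v) \<and>
     (\<exists>C. \<forall>f\<in>X. \<forall>z\<in>disk. v z * norm (T f z) \<le> C * N f)"

text \<open>T : X \<rightarrow> B_{v,0} bounded (norm of B_v is |f(0)| + sup_z v(z)|f'(z)|).\<close>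
definition bounded_into_Bv0 where
  "bounded_into_Bv0 v X N T \<longleftrightarrow> (\<forall>f\<in>X. T f \<in> Bv0 v) \<and>
     (\<exists>C. \<forall>f\<in>X. \<forall>z\<in>disk. norm (T f 0) + v z * norm (deriv (T f) z) \<le> C * N f)"

end

theory Submission
  imports Defs "HOL-Analysis.Analysis"
begin


lemma bs_lin: "banach_subspace X N \<Longrightarrow> f \<in> X \<Longrightarrow> g \<in> X \<Longrightarrow> (\<lambda>z. a * f z + b * g z) \<in> X"
  unfolding banach_subspace_def by blast

lemma bs_diff: assumes "banach_subspace X N" "f \<in> X" "g \<in> X" shows "(\<lambda>z. f z - g z) \<in> X"
proof -
  have "(\<lambda>z. 1 * f z + (-1) * g z) \<in> X" using bs_lin[OF assms] .
  thus ?thesis by simp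
qed

lemma bs_hom: "banach_subspace X N \<Longrightarrow> f \<in> X \<Longrightarrow> N (\<lambda>z. a * f z) = norm a * N f"
  unfolding banach_subspace_def by blast

lemma bs_nonneg: "banach_subspace X N \<Longrightarrow> f \<in> X \<Longrightarrow> 0 \<le> N f"
  unfolding banach_subspace_def by blast

lemma bs_zero: "banach_subspace X N \<Longrightarrow> f \<in> X \<Longrightarrow> N f = 0 \<longleftrightarrow> f = (\<lambda>z. 0)"
  unfolding banach_subspace_def by blast

lemma bs_tri: "banach_subspace X N \<Longrightarrow> f \<in> X \<Longrightarrow> g \<in> X \<Longrightarrow> N (\<lambda>z. f z + g z) \<le> N f + N g"
  unfolding banach_subspace_def by blast

lemma bs_sym: assumes "banach_subspace X N" "f \<in> X" "g \<in> X"
  shows "N (\<lambda>z. f z - g z) = N (\<lambda>z. g z - f z)"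
proof -
  have "N (\<lambda>z. (-1) * (g z - f z)) = norm (-1::complex) * N (\<lambda>z. g z - f z)"
    using bs_hom[OF assms(1) bs_diff[OF assms(1,3,2)]] .
  thus ?thesis by simp
qed

lemma bs_tri3: assumes "banach_subspace X N" "f \<in> X" "g \<in> X" "h \<in> X"
  shows "N (\<lambda>z. f z - h z) \<le> N (\<lambda>z. f z - g z) + N (\<lambda>z. g z - h z)"
proof -
  have "N (\<lambda>z. (\<lambda>z. f z - g z) z + (\<lambda>z. g z - h z) z) \<le> N (\<lambda>z. f z - g z) + N (\<lambda>z. g z - h z)"
    by (rule bs_tri[OF assms(1) bs_diff[OF assms(1,2,3)] bs_diff[OF assms(1,3,4)]])
  thus ?thesis by simp
qed

lemma bs_metric: assumes "banach_subspace X N"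
  shows "Metric_space X (\<lambda>f g. if f \<in> X \<and> g \<in> X then N (\<lambda>z. f z - g z) else 0)"
proof
  fix x y show "0 \<le> (if x \<in> X \<and> y \<in> X then N (\<lambda>z. x z - y z) else 0)"
    using bs_nonneg[OF assms bs_diff[OF assms]] by auto
  show "(if x \<in> X \<and> y \<in> X then N (\<lambda>z. x z - y z) else 0) = (if y \<in> X \<and> x \<in> X then N (\<lambda>z. y z - x z) else 0)"
    using bs_sym[OF assms] by auto
next
  fix x y assume xy: "x \<in> X" "y \<in> X"
  have "N (\<lambda>z. x z - y z) = 0 \<longleftrightarrow> (\<lambda>z. x z - y z) = (\<lambda>z. 0)"
    using bs_zero[OF assms bs_diff[OF assms xy]] .
  also have "\<dots> \<longleftrightarrow> x = y" by (metis (no_types, lifting) eq_iff_diff_eq_0 ext)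
  finally show "((if x \<in> X \<and> y \<in> X then N (\<lambda>z. x z - y z) else 0) = 0) = (x = y)" using xy by simp
next
  fix x y z assume "x \<in> X" "y \<in> X" "z \<in> X"
  thus "(if x \<in> X \<and> z \<in> X then N (\<lambda>za. x za - z za) else 0)
       \<le> (if x \<in> X \<and> y \<in> X then N (\<lambda>z. x z - y z) else 0) + (if y \<in> X \<and> z \<in> X then N (\<lambda>za. y za - z za) else 0)"
    using bs_tri3[OF assms] by auto
qed

lemma dual_zero: assumes "banach_subspace X N" "in_dual X N L" shows "L (\<lambda>z. 0) = 0"
proof -
  have z: "(\<lambda>z. 0) \<in> X" using assms(1) unfolding banach_subspace_def by blast
  have "\<forall>f\<in>X. \<forall>g\<in>X. \<forall>a b. L (\<lambda>z. a * f z + b * g z) = a * L f + b * L g"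
    using assms(2) unfolding in_dual_def by blast
  from this[rule_format, OF z z, of 0 0]
  have "L (\<lambda>z. 0 * (\<lambda>z. 0) z + 0 * (\<lambda>z. 0) z) = 0 * L (\<lambda>z. 0) + 0 * L (\<lambda>z. 0)" .
  thus ?thesis by simp
qed

lemma ubp:
  assumes bs: "banach_subspace X N"
    and lin: "\<And>i. i \<in> I \<Longrightarrow> in_dual X N (L i)"
    and pw: "\<And>f. f \<in> X \<Longrightarrow> \<exists>B. \<forall>i\<in>I. norm (L i f) \<le> B"
  shows "\<exists>C. \<forall>i\<in>I. \<forall>f\<in>X. norm (L i f) \<le> C * N f"
proof -
  define d where "d = (\<lambda>f g. if f \<in> X \<and> g \<in> X then N (\<lambda>z. f z - g z) else 0)"
  interpret M: Metric_space X d unfolding d_def by (rule bs_metric[OF bs])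
  have z0: "(\<lambda>z. 0) \<in> X" using bs unfolding banach_subspace_def by blast
  have comp: "M.mcomplete"
    unfolding M.mcomplete_def
  proof (intro allI impI)
    fix s assume "M.MCauchy s"
    hence sX: "\<forall>n. s n \<in> X" and cau: "\<forall>e>0. \<exists>K. \<forall>m n. K \<le> m \<longrightarrow> K \<le> n \<longrightarrow> d (s m) (s n) < e"
      unfolding M.MCauchy_def by auto
    have "\<forall>e>0. \<exists>M. \<forall>m\<ge>M. \<forall>n\<ge>M. N (\<lambda>z. s m z - s n z) < e"
      using cau sX unfolding d_def by simp
    then obtain l where l: "l \<in> X" "(\<lambda>n. N (\<lambda>z. s n z - l z)) \<longlonglongrightarrow> 0"
      using bs sX unfolding banach_subspace_def by blast
    have "(\<lambda>n. d (s n) l) \<longlonglongrightarrow> 0" using l sX unfolding d_def by simp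
    thus "\<exists>x. limitin M.mtopology s x sequentially"
      using l sX by (auto simp: M.limitin_metric_dist_null)
  qed
  define F where "F n = {f\<in>X. \<forall>i\<in>I. norm (L i f) \<le> real n}" for n :: nat
  have clo: "closedin M.mtopology (F n)" for n
    unfolding M.closedin_metric
  proof (intro conjI allI impI)
    show "F n \<subseteq> X" unfolding F_def by auto
    fix x assume x: "x \<in> X - F n"
    then obtain i where i: "i \<in> I" "norm (L i x) > real n" unfolding F_def by force
    obtain C where C: "\<forall>f\<in>X. norm (L i f) \<le> C * N f" using lin[OF i(1)] unfolding in_dual_def by blast
    define C' where "C' = \<bar>C\<bar> + 1"
    have C'p: "C' > 0" unfolding C'_def by simp
    have C': "norm (L i f) \<le> C' * N f" if "f \<in> X" for f
    proof -
      have "C * N f \<le> C' * N f" unfolding C'_def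
        by (intro mult_right_mono) (auto simp: bs_nonneg[OF bs that])
      thus ?thesis using C that by force
    qed
    define r where "r = (norm (L i x) - real n) / C'"
    have "r > 0" unfolding r_def using i C'p by simp
    moreover have "disjnt (F n) (M.mball x r)"
      unfolding disjnt_iff
    proof (intro allI notI)
      fix y assume "y \<in> F n \<and> y \<in> M.mball x r"
      hence y: "y \<in> X" "norm (L i y) \<le> real n" "N (\<lambda>z. x z - y z) < r"
        using i x M.in_mball unfolding F_def by (auto simp: d_def)
      have "L i (\<lambda>z. 1 * x z + (-1) * y z) = 1 * L i x + (-1) * L i y"
        using lin[OF i(1)] x y unfolding in_dual_def by blast
      hence eq: "L i (\<lambda>z. x z - y z) = L i x - L i y" by simp
      have "norm (L i x) - norm (L i y) \<le> norm (L i x - L i y)" by (rule norm_triangle_ineq2)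
      also have "\<dots> \<le> C' * N (\<lambda>z. x z - y z)" using C'[OF bs_diff[OF bs _ y(1)], of x] x eq by auto
      also have "\<dots> < C' * r" using y(3) C'p by simp
      also have "\<dots> = norm (L i x) - real n" unfolding r_def using C'p by simp
      finally show False using y(2) by simp
    qed
    ultimately show "\<exists>r>0. disjnt (F n) (M.mball x r)" by blast
  qed
  have un: "\<Union>(range F) = X"
  proof
    show "\<Union>(range F) \<subseteq> X" unfolding F_def by auto
    show "X \<subseteq> \<Union>(range F)"
    proof
      fix f assume f: "f \<in> X"
      obtain B where B: "\<forall>i\<in>I. norm (L i f) \<le> B" using pw[OF f] by blast
      obtain n :: nat where "B \<le> real n" using real_arch_simple by blast
      hence "f \<in> F n" using B f unfolding F_def by force
      thus "f \<in> \<Union>(range F)" by blast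
    qed
  qed
  have "\<exists>n. M.mtopology interior_of (F n) \<noteq> {}"
  proof (rule ccontr)
    assume "\<not> ?thesis"
    hence "M.mtopology interior_of \<Union>(range F) = {}"
      using M.metric_Baire_category_alt[OF comp, of "range F"] clo by auto
    moreover have "M.mtopology interior_of X = X"
      by (metis M.topspace_mtopology interior_of_topspace)
    ultimately show False using un z0 by auto
  qed
  then obtain n f0 e where f0: "f0 \<in> X" "e > 0" "M.mball f0 e \<subseteq> F n"
    using M.in_interior_of_mball by blast
  have "\<forall>i\<in>I. \<forall>g\<in>X. norm (L i g) \<le> (4 * real n / e) * N g"
  proof (intro ballI)
    fix i g assume i: "i \<in> I" and g: "g \<in> X"
    show "norm (L i g) \<le> (4 * real n / e) * N g"
    proof (cases "N g = 0")
      case True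
      hence "g = (\<lambda>z. 0)" using bs_zero[OF bs g] by simp
      thus ?thesis using dual_zero[OF bs lin[OF i]] True by simp
    next
      case False
      hence Ng: "N g > 0" using bs_nonneg[OF bs g] by simp
      define c where "c = e / (2 * N g)"
      have cp: "c > 0" unfolding c_def using Ng f0 by simp
      define h where "h = (\<lambda>z. 1 * f0 z + complex_of_real c * g z)"
      have hX: "h \<in> X" unfolding h_def by (rule bs_lin[OF bs f0(1) g])
      have "(\<lambda>z. h z - f0 z) = (\<lambda>z. complex_of_real c * g z)" unfolding h_def by auto
      hence "N (\<lambda>z. h z - f0 z) = c * N g" using bs_hom[OF bs g, of "complex_of_real c"] cp by simp
      also have "\<dots> = e / 2" unfolding c_def using Ng by simp
      finally have "d f0 h < e" using bs_sym[OF bs f0(1) hX] f0 hX unfolding d_def by simp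
      hence "h \<in> F n" using f0 hX by auto
      hence nh: "norm (L i h) \<le> real n" using i unfolding F_def by auto
      have nf: "norm (L i f0) \<le> real n" using f0 i M.centre_in_mball_iff unfolding F_def by blast
      have "L i h = 1 * L i f0 + complex_of_real c * L i g"
        using lin[OF i] f0 g unfolding in_dual_def h_def by blast
      hence "complex_of_real c * L i g = L i h - L i f0" by simp
      hence "c * norm (L i g) = norm (L i h - L i f0)" using cp
        by (metis abs_of_pos norm_mult norm_of_real)
      also have "\<dots> \<le> norm (L i h) + norm (L i f0)" by (rule norm_triangle_ineq4)
      also have "\<dots> \<le> 2 * real n" using nh nf by simp
      finally have "c * norm (L i g) \<le> 2 * real n" .
      hence "norm (L i g) \<le> 2 * real n / c" using cp by (simp add: field_simps)
      also have "2 * real n / c = (4 * real n / e) * N g" unfolding c_def using Ng f0 by (simp add: field_simps)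
      finally show ?thesis .
    qed
  qed
  thus ?thesis by blast
qed



lemma bdd_vanish:
  assumes c: "continuous_on disk g" and v: "vanishes_at_boundary g"
  shows "\<exists>B. \<forall>z\<in>disk. g z \<le> B"
proof -
  obtain r where r: "r < 1" "\<forall>z. r < norm z \<longrightarrow> norm z < 1 \<longrightarrow> \<bar>g z\<bar> < 1"
    using v unfolding vanishes_at_boundary_def by (meson zero_less_one)
  have sub: "cball 0 r \<subseteq> disk" using r(1) by auto
  have "compact (g ` cball 0 r)"
    by (rule compact_continuous_image[OF continuous_on_subset[OF c sub]]) simp
  then obtain B where B: "\<forall>x\<in>g ` cball 0 r. norm x \<le> B"
    using compact_imp_bounded bounded_iff by blast
  have "\<forall>z\<in>disk. g z \<le> max B 1"
  proof
    fix z :: complex assume z: "z \<in> disk"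
    show "g z \<le> max B 1"
    proof (cases "norm z \<le> r")
      case True
      hence "norm (g z) \<le> B" using B by auto
      thus ?thesis by auto
    next
      case False
      hence "\<bar>g z\<bar> < 1" using r z by auto
      thus ?thesis by auto
    qed
  qed
  thus ?thesis by blast
qed

lemma lin_T: "linear_on_HD T \<Longrightarrow> f \<in> HD \<Longrightarrow> g \<in> HD \<Longrightarrow>
   T (\<lambda>z. a * f z + b * g z) = (\<lambda>z. a * T f z + b * T g z)"
  unfolding linear_on_HD_def by blast

lemma hol_T: "linear_on_HD T \<Longrightarrow> f \<in> HD \<Longrightarrow> T f holomorphic_on disk"
  unfolding linear_on_HD_def HD_def by blast

theorem theorem2p2:
  fixes v :: "complex \<Rightarrow> real"
    and T :: "(complex \<Rightarrow> complex) \<Rightarrow> (complex \<Rightarrow> complex)"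
    and X :: "(complex \<Rightarrow> complex) set"
    and N :: "(complex \<Rightarrow> complex) \<Rightarrow> real"
  assumes "typical_weight v"
    and "linear_on_HD T"
    and "banach_subspace X N"
  shows "(bounded_into_Hv0 v X N T \<longleftrightarrow>
           (\<forall>z\<in>disk. in_dual X N (\<lambda>f. T f z)) \<and>
           (\<forall>f\<in>X. vanishes_at_boundary (\<lambda>z. v z * norm (T f z)))) \<and>
         (bounded_into_Bv0 v X N T \<longleftrightarrow>
           in_dual X N (\<lambda>f. T f 0) \<and>
           (\<forall>z\<in>disk. in_dual X N (\<lambda>f. deriv (T f) z)) \<and>
           (\<forall>f\<in>X. vanishes_at_boundary (\<lambda>z. v z * norm (deriv (T f) z))))"
proof -
  note tw = assms(1) and lT = assms(2) and bs = assms(3)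
  have XHD: "X \<subseteq> HD" using bs unfolding banach_subspace_def by (rule conjunct1)
  have vc: "continuous_on disk v" using tw unfolding typical_weight_def by (rule conjunct1)
  have vpos: "\<And>z. z \<in> disk \<Longrightarrow> 0 < v z" using tw unfolding typical_weight_def by (meson conjunct1 conjunct2)
  have TX: "T f \<in> HD" if "f \<in> X" for f using lT that XHD unfolding linear_on_HD_def by (meson conjunct1 subsetD)
  have hol: "T f holomorphic_on disk" if "f \<in> X" for f using hol_T[OF lT] that XHD by (meson subsetD)
  have holD: "deriv (T f) holomorphic_on disk" if "f \<in> X" for f
    using holomorphic_deriv[OF hol[OF that]] by simp
  have difT: "T f field_differentiable at z" if "f \<in> X" "z \<in> disk" for f z
    using holomorphic_on_imp_differentiable_at[OF hol[OF that(1)] _ that(2)] by simp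
  have linX: "T (\<lambda>z. a * f z + b * g z) = (\<lambda>z. a * T f z + b * T g z)" if "f \<in> X" "g \<in> X" for f g a b
    using lin_T[OF lT] that XHD by (meson subsetD)
  have linev: "\<forall>f\<in>X. \<forall>g\<in>X. \<forall>a b. T (\<lambda>w. a * f w + b * g w) z = a * T f z + b * T g z" for z
    using linX by simp
  have lind: "\<forall>f\<in>X. \<forall>g\<in>X. \<forall>a b. deriv (T (\<lambda>w. a * f w + b * g w)) z = a * deriv (T f) z + b * deriv (T g) z"
    if z: "z \<in> disk" for z
  proof (intro ballI allI)
    fix f g a b assume fg: "f \<in> X" "g \<in> X"
    have "deriv (\<lambda>w. a * T f w + b * T g w) z = deriv (\<lambda>w. a * T f w) z + deriv (\<lambda>w. b * T g w) z"
      by (rule deriv_add; intro field_differentiable_mult field_differentiable_const difT fg z)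
    also have "\<dots> = a * deriv (T f) z + b * deriv (T g) z"
      using deriv_cmult[OF difT[OF fg(1) z], of a] deriv_cmult[OF difT[OF fg(2) z], of b] by (simp only:)
    finally show "deriv (T (\<lambda>w. a * f w + b * g w)) z = a * deriv (T f) z + b * deriv (T g) z"
      using linX[OF fg] by simp
  qed
  have ubp_app: "\<exists>C. \<forall>z\<in>disk. \<forall>f\<in>X. v z * norm (S f z) \<le> C * N f"
    if Sd: "\<forall>z\<in>disk. in_dual X N (\<lambda>f. S f z)"
      and Sv: "\<forall>f\<in>X. vanishes_at_boundary (\<lambda>z. v z * norm (S f z))"
      and Sc: "\<And>f. f \<in> X \<Longrightarrow> continuous_on disk (S f)" for S
  proof -
    define L where "L z f = complex_of_real (v z) * S f z" for z f
    have nL: "norm (L z f) = v z * norm (S f z)" if "z \<in> disk" for z f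
      unfolding L_def using vpos[OF that] by (simp add: norm_mult)
    have "\<exists>C. \<forall>z\<in>disk. \<forall>f\<in>X. norm (L z f) \<le> C * N f"
    proof (rule ubp[OF bs])
      fix z assume z: "z \<in> disk"
      have d: "in_dual X N (\<lambda>f. S f z)" using Sd z by blast
      then obtain C where C: "\<forall>f\<in>X. norm (S f z) \<le> C * N f" unfolding in_dual_def by blast
      have "\<forall>f\<in>X. norm (L z f) \<le> (v z * C) * N f"
      proof
        fix f assume "f \<in> X"
        hence "v z * norm (S f z) \<le> v z * (C * N f)" using C vpos[OF z] by (intro mult_left_mono) auto
        thus "norm (L z f) \<le> (v z * C) * N f" using nL[OF z] by simp
      qed
      moreover have "\<forall>f\<in>X. \<forall>g\<in>X. \<forall>a b. L z (\<lambda>w. a * f w + b * g w) = a * L z f + b * L z g"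
        using d unfolding in_dual_def L_def by (simp add: distrib_left mult.left_commute)
      ultimately show "in_dual X N (L z)" unfolding in_dual_def by blast
    next
      fix f assume f: "f \<in> X"
      have "continuous_on disk (\<lambda>z. v z * norm (S f z))"
        by (intro continuous_on_mult vc continuous_on_norm Sc f)
      then obtain B where "\<forall>z\<in>disk. v z * norm (S f z) \<le> B" using bdd_vanish Sv f by blast
      thus "\<exists>B. \<forall>z\<in>disk. norm (L z f) \<le> B" using nL by auto
    qed
    thus ?thesis using nL by auto
  qed
  have bnd_div: "norm w \<le> (C / v z) * N f" if "v z * norm w \<le> C * N f" "z \<in> disk" for w C z f
  proof -
    have "norm w \<le> C * N f / v z" using that vpos[OF that(2)] by (simp add: pos_le_divide_eq mult.commute)
    thus ?thesis by simp
  qed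
  have part1: "bounded_into_Hv0 v X N T \<longleftrightarrow>
           (\<forall>z\<in>disk. in_dual X N (\<lambda>f. T f z)) \<and>
           (\<forall>f\<in>X. vanishes_at_boundary (\<lambda>z. v z * norm (T f z)))"
  proof
    assume H: "bounded_into_Hv0 v X N T"
    then obtain C where C: "\<forall>f\<in>X. \<forall>z\<in>disk. v z * norm (T f z) \<le> C * N f"
      unfolding bounded_into_Hv0_def by blast
    have hv: "\<forall>f\<in>X. T f \<in> Hv0 v" using H unfolding bounded_into_Hv0_def by blast
    have "in_dual X N (\<lambda>f. T f z)" if z: "z \<in> disk" for z
      unfolding in_dual_def
    proof
      show "\<forall>f\<in>X. \<forall>g\<in>X. \<forall>a b. T (\<lambda>w. a * f w + b * g w) z = a * T f z + b * T g z" by (rule linev)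
      show "\<exists>C. \<forall>f\<in>X. norm (T f z) \<le> C * N f"
        using bnd_div C z by blast
    qed
    moreover have "\<forall>f\<in>X. vanishes_at_boundary (\<lambda>z. v z * norm (T f z))"
      using hv unfolding Hv0_def by blast
    ultimately show "(\<forall>z\<in>disk. in_dual X N (\<lambda>f. T f z)) \<and>
           (\<forall>f\<in>X. vanishes_at_boundary (\<lambda>z. v z * norm (T f z)))" by blast
  next
    assume A: "(\<forall>z\<in>disk. in_dual X N (\<lambda>f. T f z)) \<and>
           (\<forall>f\<in>X. vanishes_at_boundary (\<lambda>z. v z * norm (T f z)))"
    have "\<exists>C. \<forall>z\<in>disk. \<forall>f\<in>X. v z * norm (T f z) \<le> C * N f"
      using A holomorphic_on_imp_continuous_on[OF hol] by (intro ubp_app) auto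
    then obtain C where C: "\<forall>z\<in>disk. \<forall>f\<in>X. v z * norm (T f z) \<le> C * N f" by blast
    have "\<forall>f\<in>X. T f \<in> Hv0 v" using A TX unfolding Hv0_def by blast
    thus "bounded_into_Hv0 v X N T" unfolding bounded_into_Hv0_def using C by blast
  qed
  have d0: "(0::complex) \<in> disk" by simp
  have part2: "bounded_into_Bv0 v X N T \<longleftrightarrow>
           in_dual X N (\<lambda>f. T f 0) \<and>
           (\<forall>z\<in>disk. in_dual X N (\<lambda>f. deriv (T f) z)) \<and>
           (\<forall>f\<in>X. vanishes_at_boundary (\<lambda>z. v z * norm (deriv (T f) z)))"
  proof
    assume H: "bounded_into_Bv0 v X N T"
    then obtain C where C: "\<forall>f\<in>X. \<forall>z\<in>disk. norm (T f 0) + v z * norm (deriv (T f) z) \<le> C * N f"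
      unfolding bounded_into_Bv0_def by blast
    have hv: "\<forall>f\<in>X. T f \<in> Bv0 v" using H unfolding bounded_into_Bv0_def by blast
    have C1: "v z * norm (deriv (T f) z) \<le> C * N f" if "f \<in> X" "z \<in> disk" for f z
      using C that by (smt (verit, best) norm_ge_zero)
    have C0: "norm (T f 0) \<le> C * N f" if "f \<in> X" for f
    proof -
      have "0 \<le> v 0 * norm (deriv (T f) 0)" using vpos[OF d0] by simp
      thus ?thesis using C that d0 by fastforce
    qed
    have "in_dual X N (\<lambda>f. T f 0)"
      unfolding in_dual_def using linev C0 by blast
    moreover have "in_dual X N (\<lambda>f. deriv (T f) z)" if z: "z \<in> disk" for z
      unfolding in_dual_def
    proof
      show "\<forall>f\<in>X. \<forall>g\<in>X. \<forall>a b. deriv (T (\<lambda>w. a * f w + b * g w)) z = a * deriv (T f) z + b * deriv (T g) z"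
        by (rule lind[OF z])
      show "\<exists>C. \<forall>f\<in>X. norm (deriv (T f) z) \<le> C * N f"
        using bnd_div C1 z by blast
    qed
    moreover have "\<forall>f\<in>X. vanishes_at_boundary (\<lambda>z. v z * norm (deriv (T f) z))"
      using hv unfolding Bv0_def by blast
    ultimately show "in_dual X N (\<lambda>f. T f 0) \<and>
           (\<forall>z\<in>disk. in_dual X N (\<lambda>f. deriv (T f) z)) \<and>
           (\<forall>f\<in>X. vanishes_at_boundary (\<lambda>z. v z * norm (deriv (T f) z)))" by blast
  next
    assume A: "in_dual X N (\<lambda>f. T f 0) \<and>
           (\<forall>z\<in>disk. in_dual X N (\<lambda>f. deriv (T f) z)) \<and>
           (\<forall>f\<in>X. vanishes_at_boundary (\<lambda>z. v z * norm (deriv (T f) z)))"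
    have "\<exists>C. \<forall>z\<in>disk. \<forall>f\<in>X. v z * norm (deriv (T f) z) \<le> C * N f"
      using A holomorphic_on_imp_continuous_on[OF holD] by (intro ubp_app[where S="\<lambda>f. deriv (T f)"]) auto
    then obtain C where C: "\<forall>z\<in>disk. \<forall>f\<in>X. v z * norm (deriv (T f) z) \<le> C * N f" by blast
    obtain C0 where C0: "\<forall>f\<in>X. norm (T f 0) \<le> C0 * N f" using A unfolding in_dual_def by blast
    have "\<forall>f\<in>X. \<forall>z\<in>disk. norm (T f 0) + v z * norm (deriv (T f) z) \<le> (C0 + C) * N f"
      using C C0 by (simp add: distrib_right add_mono)
    moreover have "\<forall>f\<in>X. T f \<in> Bv0 v" using A TX unfolding Bv0_def by blast
    ultimately show "bounded_into_Bv0 v X N T" unfolding bounded_into_Bv0_def by blast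
  qed
  show ?thesis using part1 part2 by blast
qed

end
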